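(* Let $P\in\mathbb{C}(\mathbf{x})$, $\mathbf{x}=(x_1,\dots,x_n)$, be a rational function that is homogeneous of degree $d$ (for some integer $d$), and let $S\subseteq\mathbb{R}^n$ be a significant set. If $P(\mathbf{x})=0$ for all $\mathbf{x}\in S$, then $P$ is the zero function.
   Context: A function $f$ is homogeneous of degree $d\in\mathbb{Z}$ if $f(\lambda\mathbf{x})=\lambda^d f(\mathbf{x})$ for all $\lambda\in\mathbb{R}\setminus\{0\}$ and all $\mathbf{x}$ in its domain. A subset $S\subseteq\mathbb{R}^n$ is significant if $x_1\neq0$ for all $\mathbf{x}\in S$ and the set $\hat S=\{(x_2/x_1,\dots,x_n/x_1):\mathbf{x}\in S\}$ contains a nonempty open subset of $\mathbb{R}^{n-1}$. The hypothesis includes that $P$ is defined on $S$. *)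

theory Defs
  imports "HOL-Analysis.Analysis"
begin

text \<open>Polynomials in the variables x_1,...,x_n over the complex numbers, represented by
  their coefficient function on exponent vectors.  Variable x_(i+1) has index i (i < n).\<close>

definition is_mpoly :: "nat \<Rightarrow> ((nat \<Rightarrow> nat) \<Rightarrow> complex) \<Rightarrow> bool" where
  "is_mpoly n c \<longleftrightarrow> finite {\<alpha>. c \<alpha> \<noteq> 0} \<and> (\<forall>\<alpha>. c \<alpha> \<noteq> 0 \<longrightarrow> (\<forall>i\<ge>n. \<alpha> i = 0))"

definition mpoly_eval :: "nat \<Rightarrow> ((nat \<Rightarrow> nat) \<Rightarrow> complex) \<Rightarrow> (nat \<Rightarrow> complex) \<Rightarrow> complex" where
  "mpoly_eval n c z = (\<Sum>\<alpha>\<in>{\<alpha>. c \<alpha> \<noteq> 0}. c \<alpha> * (\<Prod>i<n. z i ^ \<alpha> i))"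

definition cpoints :: "nat \<Rightarrow> (nat \<Rightarrow> complex) set" where
  "cpoints n = {z. \<forall>i\<ge>n. z i = 0}"

definition rpoints :: "nat \<Rightarrow> (nat \<Rightarrow> real) set" where
  "rpoints n = {x. \<forall>i\<ge>n. x i = 0}"

definition rat_eval :: "nat \<Rightarrow> ((nat \<Rightarrow> nat) \<Rightarrow> complex) \<Rightarrow> ((nat \<Rightarrow> nat) \<Rightarrow> complex)
    \<Rightarrow> (nat \<Rightarrow> complex) \<Rightarrow> complex" where
  "rat_eval n A B z = mpoly_eval n A z / mpoly_eval n B z"

definition rat_domain :: "nat \<Rightarrow> ((nat \<Rightarrow> nat) \<Rightarrow> complex) \<Rightarrow> (nat \<Rightarrow> complex) set" where
  "rat_domain n B = {z \<in> cpoints n. mpoly_eval n B z \<noteq> 0}"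

definition rat_homogeneous :: "nat \<Rightarrow> ((nat \<Rightarrow> nat) \<Rightarrow> complex) \<Rightarrow> ((nat \<Rightarrow> nat) \<Rightarrow> complex)
    \<Rightarrow> int \<Rightarrow> bool" where
  "rat_homogeneous n A B d \<longleftrightarrow>
     (\<forall>t::real. \<forall>z. t \<noteq> 0 \<longrightarrow> z \<in> rat_domain n B \<longrightarrow>
        (\<lambda>i. complex_of_real t * z i) \<in> rat_domain n B \<longrightarrow>
        rat_eval n A B (\<lambda>i. complex_of_real t * z i) = complex_of_real t powi d * rat_eval n A B z)"

text \<open>Significant sets.  S-hat lives in R^(n-1), represented as rpoints (n-1), carrying
  the (Euclidean) subspace topology of the product topology on nat => real.\<close>

definition hat_set :: "nat \<Rightarrow> (nat \<Rightarrow> real) set \<Rightarrow> (nat \<Rightarrow> real) set" where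
  "hat_set n S = (\<lambda>x. (\<lambda>i. if i < n - 1 then x (Suc i) / x 0 else 0)) ` S"

definition significant :: "nat \<Rightarrow> (nat \<Rightarrow> real) set \<Rightarrow> bool" where
  "significant n S \<longleftrightarrow> S \<subseteq> rpoints n \<and> (\<forall>x\<in>S. x 0 \<noteq> 0) \<and>
     (\<exists>U. openin (top_of_set (rpoints (n - 1))) U \<and> U \<noteq> {} \<and> U \<subseteq> hat_set n S)"

end

theory Submission imports Defs "HOL-Computational_Algebra.Polynomial" begin

lemma univ_zero:
  fixes a :: "nat \<Rightarrow> complex"
  assumes K: "finite K" and W: "infinite W" and z: "\<forall>w\<in>W. (\<Sum>k\<in>K. a k * w ^ k) = 0"
  shows "\<forall>k\<in>K. a k = 0"
proof -
  define p where "p = (\<Sum>k\<in>K. monom (a k) k)"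
  have ev: "poly p w = (\<Sum>k\<in>K. a k * w ^ k)" for w
    by (simp add: p_def poly_sum poly_monom)
  have "p = 0"
  proof (rule ccontr)
    assume "p \<noteq> 0"
    then have "finite {x. poly p x = 0}" by (rule poly_roots_finite)
    moreover have "W \<subseteq> {x. poly p x = 0}" using z ev by auto
    ultimately show False using W finite_subset by blast
  qed
  show ?thesis
  proof
    fix j assume j: "j \<in> K"
    have "coeff p j = (\<Sum>k\<in>K. if k = j then a k else 0)"
      by (simp add: p_def coeff_sum coeff_monom)
    also have "\<dots> = a j" using K j by (simp add: sum.delta')
    finally show "a j = 0" using \<open>p = 0\<close> by simp
  qed
qed

lemma box_lemma:
  fixes F :: "(nat\<Rightarrow>nat) set" and c :: "(nat\<Rightarrow>nat) \<Rightarrow> complex"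
    and T :: "nat \<Rightarrow> (nat \<Rightarrow> complex) \<Rightarrow> complex set"
  assumes "finite F"
   and "\<And>i z. infinite (T i z)"
   and "\<And>i z z'. (\<forall>j<i. z j = z' j) \<Longrightarrow> T i z = T i z'"
   and "\<And>z. (\<forall>i<m. z i \<in> T i z) \<Longrightarrow> (\<Sum>\<alpha>\<in>F. c \<alpha> * (\<Prod>i<m. z i ^ \<alpha> i)) = 0"
  shows "(\<Sum>\<alpha>\<in>{\<alpha>\<in>F. \<forall>i<m. \<alpha> i = \<beta> i}. c \<alpha>) = 0"
  using assms(1,4)
proof (induction m arbitrary: F \<beta>)
  case 0
  then show ?case by auto
next
  case (Suc m)
  define K where "K = (\<lambda>\<alpha>. \<alpha> m) ` F"
  have K: "finite K" using Suc.prems(1) by (simp add: K_def)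
  define Fk where "Fk k = {\<alpha>\<in>F. \<alpha> m = k}" for k
  have Fkfin: "finite (Fk k)" for k using Suc.prems(1) by (simp add: Fk_def)
  have coef0: "(\<Sum>\<alpha>\<in>Fk k. c \<alpha> * (\<Prod>i<m. z i ^ \<alpha> i)) = 0"
    if zb: "\<forall>i<m. z i \<in> T i z" and kK: "k \<in> K" for z k
  proof -
    define a where "a k = (\<Sum>\<alpha>\<in>Fk k. c \<alpha> * (\<Prod>i<m. z i ^ \<alpha> i))" for k
    have "\<forall>w\<in>T m z. (\<Sum>k\<in>K. a k * w ^ k) = 0"
    proof
      fix w assume w: "w \<in> T m z"
      define z' where "z' = z(m := w)"
      have Teq: "T i z' = T i z" if "i \<le> m" for i
        using assms(3)[of i z' z] that by (auto simp: z'_def)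
      have "\<forall>i<Suc m. z' i \<in> T i z'"
        using zb w Teq by (auto simp: z'_def less_Suc_eq)
      then have "(\<Sum>\<alpha>\<in>F. c \<alpha> * (\<Prod>i<Suc m. z' i ^ \<alpha> i)) = 0" using Suc.prems(2) by blast
      moreover have "(\<Sum>\<alpha>\<in>F. c \<alpha> * (\<Prod>i<Suc m. z' i ^ \<alpha> i))
          = (\<Sum>\<alpha>\<in>F. w ^ (\<alpha> m) * (c \<alpha> * (\<Prod>i<m. z i ^ \<alpha> i)))"
        by (rule sum.cong) (simp_all add: z'_def)
      moreover have "\<dots> = (\<Sum>k\<in>K. (\<Sum>\<alpha>\<in>Fk k. w ^ (\<alpha> m) * (c \<alpha> * (\<Prod>i<m. z i ^ \<alpha> i))))"
        unfolding Fk_def K_def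
        by (rule sum.group[symmetric]) (use Suc.prems(1) in auto)
      moreover have "\<dots> = (\<Sum>k\<in>K. a k * w ^ k)"
        unfolding a_def by (auto simp: Fk_def sum_distrib_left sum_distrib_right mult_ac intro!: sum.cong)
      ultimately show "(\<Sum>k\<in>K. a k * w ^ k) = 0" by simp
    qed
    then have "\<forall>k\<in>K. a k = 0" using univ_zero[OF K assms(2)] by blast
    then show ?thesis using kK a_def by simp
  qed
  show ?case
  proof (cases "\<beta> m \<in> K")
    case True
    have "(\<Sum>\<alpha>\<in>{\<alpha>\<in>Fk (\<beta> m). \<forall>i<m. \<alpha> i = \<beta> i}. c \<alpha>) = 0"
      using Suc.IH[OF Fkfin] coef0 True by blast
    moreover have "{\<alpha>\<in>Fk (\<beta> m). \<forall>i<m. \<alpha> i = \<beta> i} = {\<alpha>\<in>F. \<forall>i<Suc m. \<alpha> i = \<beta> i}"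
      by (auto simp: Fk_def less_Suc_eq)
    ultimately show ?thesis by simp
  next
    case False
    then have "\<forall>\<alpha>\<in>F. \<alpha> m \<noteq> \<beta> m" unfolding K_def by (metis image_eqI)
    then have "{\<alpha>\<in>F. \<forall>i<Suc m. \<alpha> i = \<beta> i} = {}" by blast
    then show ?thesis by (metis sum.empty)
  qed
qed


lemma open_real_infinite:
  fixes X :: "real set"
  assumes "open X" "a \<in> X"
  shows "infinite X"
proof -
  have "a islimpt X" using assms by (simp add: interior_limit_point interior_open)
  then have "infinite (X \<inter> ball a 1)" by (simp add: islimpt_eq_infinite_ball)
  then show ?thesis by auto
qed

lemma coeffs_zero:
  fixes c :: "(nat\<Rightarrow>nat) \<Rightarrow> complex"
    and T :: "nat \<Rightarrow> (nat \<Rightarrow> complex) \<Rightarrow> complex set"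
  assumes mp: "is_mpoly n c"
   and "\<And>i z. infinite (T i z)"
   and "\<And>i z z'. (\<forall>j<i. z j = z' j) \<Longrightarrow> T i z = T i z'"
   and ev: "\<And>z. (\<forall>i<n. z i \<in> T i z) \<Longrightarrow> mpoly_eval n c z = 0"
  shows "c = (\<lambda>_. 0)"
proof (rule ccontr)
  assume "c \<noteq> (\<lambda>_. 0)"
  then obtain \<beta> where b: "c \<beta> \<noteq> 0" by auto
  define F where "F = {\<alpha>. c \<alpha> \<noteq> 0}"
  have fin: "finite F" using mp by (simp add: is_mpoly_def F_def)
  have "(\<Sum>\<alpha>\<in>{\<alpha>\<in>F. \<forall>i<n. \<alpha> i = \<beta> i}. c \<alpha>) = 0"
    by (rule box_lemma[OF fin assms(2,3)]) (use ev in \<open>auto simp: mpoly_eval_def F_def\<close>)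
  moreover have "{\<alpha>\<in>F. \<forall>i<n. \<alpha> i = \<beta> i} = {\<beta>}"
  proof -
    have "\<alpha> = \<beta>" if "\<alpha> \<in> F" "\<forall>i<n. \<alpha> i = \<beta> i" for \<alpha>
    proof
      fix i show "\<alpha> i = \<beta> i"
        using that b mp by (cases "i < n") (auto simp: is_mpoly_def F_def, metis not_le)
    qed
    then show ?thesis using b by (auto simp: F_def)
  qed
  ultimately show False using b by simp
qed

lemma ray_zero:
  fixes A B :: "(nat\<Rightarrow>nat) \<Rightarrow> complex" and x :: "nat \<Rightarrow> complex"
  assumes mA: "is_mpoly n A" and mB: "is_mpoly n B"
    and hom: "rat_homogeneous n A B d"
    and x: "x \<in> cpoints n" and Bx: "mpoly_eval n B x \<noteq> 0" and Ax: "mpoly_eval n A x = 0"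
  shows "mpoly_eval n A (\<lambda>i. complex_of_real s * x i) = 0"
proof -
  define P where "P c = (\<Sum>\<alpha>\<in>{\<alpha>. c \<alpha> \<noteq> 0}. monom (c \<alpha> * (\<Prod>i<n. x i ^ \<alpha> i)) (\<Sum>i<n. \<alpha> i))"
    for c :: "(nat\<Rightarrow>nat) \<Rightarrow> complex"
  have Pev: "poly (P c) w = mpoly_eval n c (\<lambda>i. w * x i)" for c w
    by (auto simp: P_def poly_sum poly_monom mpoly_eval_def power_mult_distrib prod.distrib
        power_sum mult_ac intro!: sum.cong)
  have "poly (P B) 1 \<noteq> 0" using Bx by (simp add: Pev)
  then have "P B \<noteq> 0" by auto
  then have finR: "finite {w. poly (P B) w = 0}" by (rule poly_roots_finite)
  define W where "W = complex_of_real ` (UNIV - {0}) - {w. poly (P B) w = 0}"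
  have "infinite (complex_of_real ` (UNIV - {0::real}))"
  proof
    assume "finite (complex_of_real ` (UNIV - {0::real}))"
    then have "finite (UNIV - {0::real})" by (rule finite_imageD) (auto simp: inj_on_def)
    then show False by (simp add: infinite_UNIV_char_0)
  qed
  then have infW: "infinite W" using finR by (simp add: W_def)
  have "poly (P A) w = 0" if w: "w \<in> W" for w
  proof -
    obtain t :: real where t: "t \<noteq> 0" "w = of_real t" using w by (auto simp: W_def)
    have dx: "x \<in> rat_domain n B" using x Bx by (simp add: rat_domain_def)
    have dtx: "(\<lambda>i. complex_of_real t * x i) \<in> rat_domain n B"
      using x w t Pev[of B w] by (auto simp: rat_domain_def cpoints_def W_def)
    have "rat_eval n A B (\<lambda>i. complex_of_real t * x i) = complex_of_real t powi d * rat_eval n A B x"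
      using hom t dx dtx by (simp add: rat_homogeneous_def)
    also have "\<dots> = 0" using Ax by (simp add: rat_eval_def)
    finally have "mpoly_eval n A (\<lambda>i. complex_of_real t * x i) = 0"
      using dtx by (simp add: rat_eval_def rat_domain_def)
    then show ?thesis using t by (simp add: Pev)
  qed
  then have "P A = 0"
    using infW poly_roots_finite[of "P A"] finite_subset[of W "{w. poly (P A) w = 0}"] by blast
  then show ?thesis using Pev[of A "of_real s"] by simp
qed


theorem lemma2:
  fixes n :: nat and d :: int
    and A B :: "(nat \<Rightarrow> nat) \<Rightarrow> complex"
    and S :: "(nat \<Rightarrow> real) set"
  assumes "n \<ge> 1"
    and "is_mpoly n A" and "is_mpoly n B" and "B \<noteq> (\<lambda>_. 0)"
    and "rat_homogeneous n A B d"
    and "significant n S"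
    and "\<forall>x\<in>S. (\<lambda>i. complex_of_real (x i)) \<in> rat_domain n B"
    and "\<forall>x\<in>S. rat_eval n A B (\<lambda>i. complex_of_real (x i)) = 0"
  shows "\<forall>z\<in>rat_domain n B. rat_eval n A B z = 0"
proof -
  obtain U where U: "openin (top_of_set (rpoints (n - 1))) U" "U \<noteq> {}" "U \<subseteq> hat_set n S"
    using assms(6) unfolding significant_def by blast
  obtain V where V: "open V" "U = V \<inter> rpoints (n - 1)"
    using U(1) by (metis openin_open Int_commute)
  obtain y0 where y0: "y0 \<in> U" using U(2) by auto
  have "openin (product_topology (\<lambda>i. euclidean) UNIV) V" using V(1) by (simp add: open_fun_def)
  moreover have "y0 \<in> V" using y0 V(2) by blast
  ultimately have "\<exists>X. y0 \<in> (\<Pi>\<^sub>E i\<in>UNIV. X i) \<and> (\<forall>i. openin euclidean (X i)) \<and> finite {i. X i \<noteq> topspace euclidean} \<and> (\<Pi>\<^sub>E i\<in>UNIV. X i) \<subseteq> V"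
    by (rule product_topology_open_contains_basis)
  then obtain X where X: "y0 \<in> (\<Pi>\<^sub>E i\<in>UNIV. X i)" "\<And>i. openin euclidean (X i)"
      "(\<Pi>\<^sub>E i\<in>UNIV. X i) \<subseteq> V"
    by blast
  have Xo: "open (X i)" for i using X(2) by simp
  have y0X: "y0 i \<in> X i" for i using X(1) by auto
  have Xinf: "infinite (X i)" for i using open_real_infinite[OF Xo y0X] .
  define T :: "nat \<Rightarrow> (nat \<Rightarrow> complex) \<Rightarrow> complex set" where
    "T i z = (if i = 0 then complex_of_real ` (UNIV - {0})
              else if z 0 = 0 then UNIV else (\<lambda>r. z 0 * complex_of_real r) ` X (i - 1))" for i z
  have Tinf: "infinite (T i z)" for i z
  proof (cases "i = 0")
    case True
    show ?thesis
    proof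
      assume "finite (T i z)"
      then have "finite (complex_of_real ` (UNIV - {0::real}))" using True by (simp add: T_def)
      then have "finite (UNIV - {0::real})" by (rule finite_imageD) (auto simp: inj_on_def)
      then show False by (simp add: infinite_UNIV_char_0)
    qed
  next
    case False
    show ?thesis
    proof (cases "z 0 = 0")
      case True
      then show ?thesis using False by (simp add: T_def infinite_UNIV_char_0)
    next
      case z0: False
      show ?thesis
      proof
        assume "finite (T i z)"
        then have "finite ((\<lambda>r. z 0 * complex_of_real r) ` X (i - 1))" using False z0 by (simp add: T_def)
        then have "finite (X (i - 1))" by (rule finite_imageD) (use z0 in \<open>auto simp: inj_on_def\<close>)
        then show False using Xinf by blast
      qed
    qed
  qed
  have Tdep: "T i z = T i z'" if "\<forall>j<i. z j = z' j" for i z z'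
    using that by (cases "i = 0") (auto simp: T_def)
  have Azero: "mpoly_eval n A z = 0" if zb: "\<forall>i<n. z i \<in> T i z" for z
  proof -
    from zb assms(1) have "z 0 \<in> T 0 z" by auto
    then obtain t :: real where t: "t \<noteq> 0" "z 0 = of_real t" by (auto simp: T_def)
    have "\<forall>i. \<exists>r. 0 < i \<and> i < n \<longrightarrow> r \<in> X (i - 1) \<and> z i = z 0 * of_real r"
    proof
      fix i show "\<exists>r. 0 < i \<and> i < n \<longrightarrow> r \<in> X (i - 1) \<and> z i = z 0 * of_real r"
      proof (cases "0 < i \<and> i < n")
        case True
        then have "z i \<in> T i z" using zb by auto
        then show ?thesis using True t by (auto simp: T_def)
      qed auto
    qed
    then obtain r where r: "\<And>i. 0 < i \<Longrightarrow> i < n \<Longrightarrow> r i \<in> X (i - 1) \<and> z i = z 0 * of_real (r i)"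
      by metis
    define y where "y i = (if i < n - 1 then r (Suc i) else 0)" for i
    have y0r: "y0 \<in> rpoints (n - 1)" using y0 V(2) by auto
    have yr: "y \<in> rpoints (n - 1)" by (simp add: rpoints_def y_def)
    have "y \<in> (\<Pi>\<^sub>E i\<in>UNIV. X i)"
    proof -
      have "y i \<in> X i" for i
      proof (cases "i < n - 1")
        case True then show ?thesis using r[of "Suc i"] by (simp add: y_def)
      next
        case False then have "y0 i = 0" using y0r by (simp add: rpoints_def)
        then show ?thesis using y0X[of i] False by (simp add: y_def)
      qed
      then show ?thesis by auto
    qed
    then have "y \<in> U" using X(3) V(2) yr by auto
    then obtain x where x: "x \<in> S" "y = (\<lambda>i. if i < n - 1 then x (Suc i) / x 0 else 0)"
      using U(3) by (auto simp: hat_set_def)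
    have xr: "x \<in> rpoints n" and x0: "x 0 \<noteq> 0" using assms(6) x(1) by (auto simp: significant_def)
    define x' where "x' = (\<lambda>i. complex_of_real (x i))"
    have x'c: "x' \<in> cpoints n" using xr by (simp add: x'_def cpoints_def rpoints_def)
    have Bx': "mpoly_eval n B x' \<noteq> 0" using assms(7) x(1) by (simp add: x'_def rat_domain_def)
    have Ax': "mpoly_eval n A x' = 0" using assms(8) x(1) Bx' unfolding x'_def rat_eval_def by fastforce
    have ray: "mpoly_eval n A (\<lambda>i. complex_of_real (t / x 0) * x' i) = 0"
      by (rule ray_zero[OF assms(2,3,5) x'c Bx' Ax'])
    have zi: "z i = complex_of_real (t / x 0) * x' i" if "i < n" for i
    proof (cases "i = 0")
      case True then show ?thesis using t x0 by (simp add: x'_def)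
    next
      case False
      then obtain j where j: "i = Suc j" by (cases i) auto
      have "y j = x (Suc j) / x 0" using x(2) j that by simp
      moreover have "y j = r i" using j that by (simp add: y_def)
      moreover have "z i = z 0 * of_real (r i)" using r[of i] False that by auto
      ultimately show ?thesis using t x0 j by (simp add: x'_def)
    qed
    have "mpoly_eval n A z = mpoly_eval n A (\<lambda>i. complex_of_real (t / x 0) * x' i)"
      unfolding mpoly_eval_def by (intro sum.cong refl arg_cong2[where f="(*)"] prod.cong) (auto simp: zi)
    then show ?thesis using ray by simp
  qed
  have "A = (\<lambda>_. 0)" by (rule coeffs_zero[OF assms(2) Tinf Tdep Azero])
  then show ?thesis by (simp add: rat_eval_def mpoly_eval_def)
qed

end
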